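(* Let $Z$ be a random variable that is moment bounded with parameter $L>0$, let $k\ge1$ be an integer, $S\subseteq[k]$ a nonempty set, and $d_t$ a positive integer for each $t\in S$. Let $D=\sum_{t\in S}td_t$ and $d=\sum_{t\in S}d_t$. Then $$\left|\mathbb E\Big[\prod_{t\in S}(Z^t)^{d_t}\Big]\right|\le\min_{t\in S}\left\{\frac{L^{D-t}\,D!\,\mathbb E[|Z|^t]}{t!}\right\}$$ and $$\left|\mathbb E\Big[\prod_{t\in S}\big(Z^t-\mathbb E[Z^t]\big)^{d_t}\Big]\right|\le\min_{t\in S}\left\{\frac{2^dL^{D-t}\,D!\,\mathbb E[|Z|^t]}{t!}\right\}.$$
   Context: A random variable $Z$ is moment bounded with parameter $L>0$ if for every integer $i\ge1$, $\mathbb E[|Z|^i]\le iL\,\mathbb E[|Z|^{i-1}]$. *)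

theory Defs
  imports "HOL-Probability.Probability"
begin

text \<open>Expectations of the nonnegative variables
  |Z|^i are taken as (extended, nonnegative) Lebesgue integrals, so the
  definition makes sense without presupposing finiteness; finiteness of all
  absolute moments follows from it by induction (E[|Z|^0] = 1).\<close>

definition moment_bounded :: "'a measure \<Rightarrow> ('a \<Rightarrow> real) \<Rightarrow> real \<Rightarrow> bool" where
  "moment_bounded M Z L \<longleftrightarrow>
     (\<forall>i::nat. i \<ge> 1 \<longrightarrow>
        (\<integral>\<^sup>+ x. ennreal (\<bar>Z x\<bar> ^ i) \<partial>M)
          \<le> ennreal (real i * L) * (\<integral>\<^sup>+ x. ennreal (\<bar>Z x\<bar> ^ (i - 1)) \<partial>M))"

end

theory Submission
  imports Defs
begin

locale mbZ = prob_space M for M :: "'a measure" +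
  fixes Z :: "'a \<Rightarrow> real" and L :: real
  assumes Zm[measurable]: "Z \<in> borel_measurable M" and Lpos: "L > 0"
    and mb: "moment_bounded M Z L"
begin

lemma nn_fin: "(\<integral>\<^sup>+ x. ennreal (\<bar>Z x\<bar> ^ i) \<partial>M) < \<infinity>"
proof (induction i)
  case 0
  then show ?case by (simp add: emeasure_space_1)
next
  case (Suc i)
  have "(\<integral>\<^sup>+ x. ennreal (\<bar>Z x\<bar> ^ Suc i) \<partial>M)
     \<le> ennreal (real (Suc i) * L) * (\<integral>\<^sup>+ x. ennreal (\<bar>Z x\<bar> ^ i) \<partial>M)"
    using mb unfolding moment_bounded_def by (metis diff_Suc_1 le_add1 plus_1_eq_Suc)
  also have "\<dots> < \<infinity>" using Suc by (simp add: ennreal_mult_less_top)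
  finally show ?case .
qed

lemma int_pow: "integrable M (\<lambda>x. \<bar>Z x\<bar> ^ i)"
  by (rule integrableI_nonneg) (auto intro: nn_fin[unfolded infinity_ennreal_def])

lemma nn_eq: "(\<integral>\<^sup>+ x. ennreal (\<bar>Z x\<bar> ^ i) \<partial>M) = ennreal (expectation (\<lambda>x. \<bar>Z x\<bar> ^ i))"
  by (rule nn_integral_eq_integral[OF int_pow]) auto

lemma mom_rec: "expectation (\<lambda>x. \<bar>Z x\<bar> ^ Suc i) \<le> real (Suc i) * L * expectation (\<lambda>x. \<bar>Z x\<bar> ^ i)"
proof -
  have "ennreal (expectation (\<lambda>x. \<bar>Z x\<bar> ^ Suc i))
     \<le> ennreal (real (Suc i) * L) * ennreal (expectation (\<lambda>x. \<bar>Z x\<bar> ^ i))"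
    using mb unfolding moment_bounded_def nn_eq by (metis diff_Suc_1 le_add1 plus_1_eq_Suc)
  also have "\<dots> = ennreal (real (Suc i) * L * expectation (\<lambda>x. \<bar>Z x\<bar> ^ i))"
    using Lpos by (simp add: ennreal_mult)
  finally show ?thesis
    by (subst (asm) ennreal_le_iff) (auto intro!: mult_nonneg_nonneg Lpos[THEN less_imp_le])
qed

lemma mom_chain:
  assumes "t \<le> n"
  shows "expectation (\<lambda>x. \<bar>Z x\<bar> ^ n) \<le> L ^ (n - t) * fact n / fact t * expectation (\<lambda>x. \<bar>Z x\<bar> ^ t)"
  using assms
proof (induction n rule: dec_induct)
  case base
  then show ?case by simp
next
  case (step n)
  have "expectation (\<lambda>x. \<bar>Z x\<bar> ^ Suc n) \<le> real (Suc n) * L * expectation (\<lambda>x. \<bar>Z x\<bar> ^ n)"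
    by (rule mom_rec)
  also have "\<dots> \<le> real (Suc n) * L * (L ^ (n - t) * fact n / fact t * expectation (\<lambda>x. \<bar>Z x\<bar> ^ t))"
    using step.IH Lpos by (intro mult_left_mono) auto
  also have "\<dots> = L ^ (Suc n - t) * fact (Suc n) / fact t * expectation (\<lambda>x. \<bar>Z x\<bar> ^ t)"
    using step.hyps by (simp add: Suc_diff_le algebra_simps)
  finally show ?case .
qed

lemma mom_mult:
  "expectation (\<lambda>x. \<bar>Z x\<bar> ^ a) * expectation (\<lambda>x. \<bar>Z x\<bar> ^ b) \<le> expectation (\<lambda>x. \<bar>Z x\<bar> ^ (a + b))"
proof -
  define f where "f = (\<lambda>x. \<bar>Z x\<bar> ^ a)"
  define g where "g = (\<lambda>x. \<bar>Z x\<bar> ^ b)"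
  have fg: "(\<lambda>x. \<bar>Z x\<bar> ^ (a + b)) = (\<lambda>x. f x * g x)" by (simp add: f_def g_def power_add)
  have [intro]: "integrable M f" "integrable M g" "integrable M (\<lambda>x. f x * g x)"
    using int_pow[of a] int_pow[of b] int_pow[of "a+b"] fg by (simp_all add: f_def g_def)
  have pt: "0 \<le> (f x - f y) * (g x - g y)" for x y
  proof (cases "\<bar>Z x\<bar> \<le> \<bar>Z y\<bar>")
    case True
    then have "f x \<le> f y" "g x \<le> g y" by (auto simp: f_def g_def intro: power_mono)
    then show ?thesis by (simp add: mult_nonpos_nonpos)
  next
    case False
    then have "f y \<le> f x" "g y \<le> g x" by (auto simp: f_def g_def intro: power_mono)
    then show ?thesis by simp
  qed
  have inner: "0 \<le> f x * g x - f x * expectation g - g x * expectation f + expectation (\<lambda>y. f y * g y)" for x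
  proof -
    have "0 \<le> expectation (\<lambda>y. (f x - f y) * (g x - g y))"
      by (rule integral_nonneg_AE) (simp add: pt)
    also have "(\<lambda>y. (f x - f y) * (g x - g y)) = (\<lambda>y. (f x * g x - f x * g y) + (f y * g y - g x * f y))"
      by (auto simp: algebra_simps)
    also have "expectation \<dots> = expectation (\<lambda>y. f x * g x - f x * g y) + expectation (\<lambda>y. f y * g y - g x * f y)"
      by (rule Bochner_Integration.integral_add) (auto intro!: Bochner_Integration.integrable_diff Bochner_Integration.integrable_add integrable_mult_right integrable_mult_left)
    also have "expectation (\<lambda>y. f x * g x - f x * g y) = f x * g x - f x * expectation g"
      by (subst Bochner_Integration.integral_diff) (auto simp: prob_space intro!: Bochner_Integration.integrable_diff Bochner_Integration.integrable_add integrable_mult_right integrable_mult_left)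
    also have "expectation (\<lambda>y. f y * g y - g x * f y) = expectation (\<lambda>y. f y * g y) - g x * expectation f"
      by (subst Bochner_Integration.integral_diff) (auto intro!: Bochner_Integration.integrable_diff Bochner_Integration.integrable_add integrable_mult_right integrable_mult_left)
    finally show ?thesis by linarith
  qed
  have "0 \<le> expectation (\<lambda>x. f x * g x - f x * expectation g - g x * expectation f + expectation (\<lambda>y. f y * g y))"
    by (rule integral_nonneg_AE) (simp add: inner)
  also have "\<dots> = 2 * expectation (\<lambda>x. f x * g x) - 2 * expectation f * expectation g"
    by (subst Bochner_Integration.integral_add Bochner_Integration.integral_diff; auto simp: prob_space algebra_simps intro!: Bochner_Integration.integrable_diff Bochner_Integration.integrable_add integrable_mult_right integrable_mult_left)+
  finally show ?thesis by (simp add: fg f_def g_def)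
qed

lemma mom_nonneg: "0 \<le> expectation (\<lambda>x. \<bar>Z x\<bar> ^ s)"
  by (rule integral_nonneg_AE) auto

lemma list_bound:
  "integrable M (\<lambda>x. \<bar>Z x\<bar> ^ a * prod_list (map (\<lambda>s. \<bar>Z x\<bar> ^ s + expectation (\<lambda>y. \<bar>Z y\<bar> ^ s)) xs))
   \<and> expectation (\<lambda>x. \<bar>Z x\<bar> ^ a * prod_list (map (\<lambda>s. \<bar>Z x\<bar> ^ s + expectation (\<lambda>y. \<bar>Z y\<bar> ^ s)) xs))
     \<le> 2 ^ length xs * expectation (\<lambda>x. \<bar>Z x\<bar> ^ (a + sum_list xs))"
proof (induction xs arbitrary: a)
  case Nil
  then show ?case using int_pow[of a] by simp
next
  case (Cons s xs)
  define m where "m = (\<lambda>s. expectation (\<lambda>y. \<bar>Z y\<bar> ^ s))"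
  define P where "P = (\<lambda>x. prod_list (map (\<lambda>s. \<bar>Z x\<bar> ^ s + m s) xs))"
  have IH1: "integrable M (\<lambda>x. \<bar>Z x\<bar> ^ c * P x)" 
    "expectation (\<lambda>x. \<bar>Z x\<bar> ^ c * P x) \<le> 2 ^ length xs * m (c + sum_list xs)" for c
    using Cons.IH[of c] by (simp_all add: P_def m_def)
  have eq: "(\<lambda>x. \<bar>Z x\<bar> ^ a * prod_list (map (\<lambda>s. \<bar>Z x\<bar> ^ s + m s) (s # xs)))
    = (\<lambda>x. \<bar>Z x\<bar> ^ (a + s) * P x + m s * (\<bar>Z x\<bar> ^ a * P x))"
    by (auto simp: P_def power_add algebra_simps)
  have int: "integrable M (\<lambda>x. \<bar>Z x\<bar> ^ (a + s) * P x + m s * (\<bar>Z x\<bar> ^ a * P x))"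
    using IH1 by (auto intro!: Bochner_Integration.integrable_add integrable_mult_right)
  have "expectation (\<lambda>x. \<bar>Z x\<bar> ^ (a + s) * P x + m s * (\<bar>Z x\<bar> ^ a * P x))
     = expectation (\<lambda>x. \<bar>Z x\<bar> ^ (a + s) * P x) + m s * expectation (\<lambda>x. \<bar>Z x\<bar> ^ a * P x)"
    using IH1 by (subst Bochner_Integration.integral_add) (auto intro!: integrable_mult_right)
  also have "\<dots> \<le> 2 ^ length xs * m (a + s + sum_list xs) + m s * (2 ^ length xs * m (a + sum_list xs))"
    using IH1 mom_nonneg by (intro add_mono mult_left_mono) (auto simp: m_def)
  also have "m s * (2 ^ length xs * m (a + sum_list xs)) = 2 ^ length xs * (m s * m (a + sum_list xs))"
    by simp
  also have "m s * m (a + sum_list xs) \<le> m (s + (a + sum_list xs))"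
    unfolding m_def by (rule mom_mult)
  finally have "expectation (\<lambda>x. \<bar>Z x\<bar> ^ (a + s) * P x + m s * (\<bar>Z x\<bar> ^ a * P x))
     \<le> 2 ^ length (s # xs) * m (a + sum_list (s # xs))"
    by (simp add: algebra_simps)
  then show ?case using int eq by (simp add: m_def)
qed

lemma prod_list_concat_rep:
  "prod_list (map h (concat (map (\<lambda>t. replicate (d t) t) ys))) = prod_list (map (\<lambda>t. h t ^ d t) ys)"
  by (induction ys) (auto simp: prod_list_replicate)

lemma sum_list_concat_rep:
  "sum_list (concat (map (\<lambda>t. replicate (d t) t) ys)) = sum_list (map (\<lambda>t. t * d t) ys)"
  by (induction ys) (auto simp: sum_list_replicate)

lemma main:
  fixes S :: "nat set" and d :: "nat \<Rightarrow> nat"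
  assumes fin: "finite S" and ne: "S \<noteq> {}" and dpos: "\<And>t. t \<in> S \<Longrightarrow> d t > 0"
  defines "D \<equiv> (\<Sum>t\<in>S. t * d t)"
    and "dd \<equiv> (\<Sum>t\<in>S. d t)"
  shows "\<bar>expectation (\<lambda>x. \<Prod>t\<in>S. (Z x ^ t) ^ d t)\<bar>
           \<le> Min ((\<lambda>t. L ^ (D - t) * fact D * expectation (\<lambda>x. \<bar>Z x\<bar> ^ t) / fact t) ` S)
       \<and> \<bar>expectation
            (\<lambda>x. \<Prod>t\<in>S. (Z x ^ t - expectation (\<lambda>y. Z y ^ t)) ^ d t)\<bar>
           \<le> Min ((\<lambda>t. 2 ^ dd * L ^ (D - t) * fact D * expectation (\<lambda>x. \<bar>Z x\<bar> ^ t) / fact t) ` S)"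
proof -
  define m where "m = (\<lambda>s. expectation (\<lambda>y. \<bar>Z y\<bar> ^ s))"
  have tD: "t \<le> D" if "t \<in> S" for t
  proof -
    have "t \<le> t * d t" using dpos[OF that] by simp
    also have "\<dots> \<le> D" unfolding D_def using fin that by (intro member_le_sum) auto
    finally show ?thesis .
  qed
  have chain: "m D \<le> L ^ (D - t) * fact D * m t / fact t" if "t \<in> S" for t
    using mom_chain[OF tD[OF that]] by (simp add: m_def)
  have m0: "0 \<le> m s" for s unfolding m_def by (rule mom_nonneg)
  have p1: "\<bar>expectation (\<lambda>x. \<Prod>t\<in>S. (Z x ^ t) ^ d t)\<bar> \<le> m D"
  proof -
    have "(\<lambda>x. \<Prod>t\<in>S. (Z x ^ t) ^ d t) = (\<lambda>x. Z x ^ D)"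
      by (auto simp: D_def power_mult[symmetric] power_sum)
    moreover have "\<bar>expectation (\<lambda>x. Z x ^ D)\<bar> \<le> m D"
      using integral_abs_bound[of M "\<lambda>x. Z x ^ D"] by (simp add: m_def power_abs)
    ultimately show ?thesis by simp
  qed
  define xs where "xs = concat (map (\<lambda>t. replicate (d t) t) (sorted_list_of_set S))"
  have lxs: "length xs = dd"
    unfolding xs_def dd_def length_concat
    by (simp add: comp_def sum_list_distinct_conv_sum_set fin)
  have sxs: "sum_list xs = D"
    unfolding xs_def D_def sum_list_concat_rep
    by (simp add: sum_list_distinct_conv_sum_set fin)
  have pxs: "prod_list (map h xs) = (\<Prod>t\<in>S. h t ^ d t)" for h :: "nat \<Rightarrow> real"
    unfolding xs_def prod_list_concat_rep
    by (simp add: prod.distinct_set_conv_list[symmetric] fin)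
  define G where "G = (\<lambda>x. \<Prod>t\<in>S. (\<bar>Z x\<bar> ^ t + m t) ^ d t)"
  have LB: "integrable M G \<and> expectation G \<le> 2 ^ dd * m D"
    using list_bound[of 0 xs] by (simp add: G_def pxs lxs sxs m_def)
  have mu: "\<bar>expectation (\<lambda>y. Z y ^ t)\<bar> \<le> m t" for t
    using integral_abs_bound[of M "\<lambda>x. Z x ^ t"] by (simp add: m_def power_abs)
  have pw: "\<bar>\<Prod>t\<in>S. (Z x ^ t - expectation (\<lambda>y. Z y ^ t)) ^ d t\<bar> \<le> G x" for x
    unfolding G_def abs_prod
  proof (rule prod_mono, rule conjI)
    fix t
    show "0 \<le> \<bar>(Z x ^ t - expectation (\<lambda>y. Z y ^ t)) ^ d t\<bar>" by simp
    have "\<bar>Z x ^ t - expectation (\<lambda>y. Z y ^ t)\<bar> \<le> \<bar>Z x\<bar> ^ t + m t"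
      using mu[of t] by (simp add: power_abs abs_triangle_ineq4 order_trans[OF abs_triangle_ineq4])
    then show "\<bar>(Z x ^ t - expectation (\<lambda>y. Z y ^ t)) ^ d t\<bar> \<le> (\<bar>Z x\<bar> ^ t + m t) ^ d t"
      by (simp add: power_abs power_mono)
  qed
  have p2: "\<bar>expectation (\<lambda>x. \<Prod>t\<in>S. (Z x ^ t - expectation (\<lambda>y. Z y ^ t)) ^ d t)\<bar> \<le> 2 ^ dd * m D"
  proof -
    have "\<bar>expectation (\<lambda>x. \<Prod>t\<in>S. (Z x ^ t - expectation (\<lambda>y. Z y ^ t)) ^ d t)\<bar>
        \<le> expectation (\<lambda>x. \<bar>\<Prod>t\<in>S. (Z x ^ t - expectation (\<lambda>y. Z y ^ t)) ^ d t\<bar>)"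
      by (rule integral_abs_bound)
    also have "\<dots> \<le> expectation G"
      using LB pw by (intro integral_mono_AE') (auto intro: order_trans[OF abs_ge_zero])
    finally show ?thesis using LB by linarith
  qed
  have fimg: "finite (f ` S)" "f ` S \<noteq> {}" for f :: "nat \<Rightarrow> real" using fin ne by auto
  show ?thesis
  proof
    show "\<bar>expectation (\<lambda>x. \<Prod>t\<in>S. (Z x ^ t) ^ d t)\<bar>
           \<le> Min ((\<lambda>t. L ^ (D - t) * fact D * expectation (\<lambda>x. \<bar>Z x\<bar> ^ t) / fact t) ` S)"
      unfolding Min_ge_iff[OF fimg] using p1 chain by (auto simp: m_def intro: order_trans)
    show "\<bar>expectation (\<lambda>x. \<Prod>t\<in>S. (Z x ^ t - expectation (\<lambda>y. Z y ^ t)) ^ d t)\<bar>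
           \<le> Min ((\<lambda>t. 2 ^ dd * L ^ (D - t) * fact D * expectation (\<lambda>x. \<bar>Z x\<bar> ^ t) / fact t) ` S)"
      unfolding Min_ge_iff[OF fimg]
    proof (intro ballI, elim imageE)
      fix y t assume "y = 2 ^ dd * L ^ (D - t) * fact D * expectation (\<lambda>x. \<bar>Z x\<bar> ^ t) / fact t" "t \<in> S"
      moreover from chain[OF \<open>t \<in> S\<close>] have "2 ^ dd * m D \<le> 2 ^ dd * (L ^ (D - t) * fact D * m t / fact t)"
        by (intro mult_left_mono) auto
      ultimately show "\<bar>expectation (\<lambda>x. \<Prod>t\<in>S. (Z x ^ t - expectation (\<lambda>y. Z y ^ t)) ^ d t)\<bar> \<le> y"
        using p2 by (simp add: m_def)
    qed
  qed
qed

end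


theorem lemma3:
  fixes M :: "'a measure" and Z :: "'a \<Rightarrow> real" and L :: real
    and k :: nat and S :: "nat set" and d :: "nat \<Rightarrow> nat"
  assumes "prob_space M"
    and "Z \<in> borel_measurable M"
    and "L > 0"
    and "moment_bounded M Z L"
    and "k \<ge> 1"
    and "S \<subseteq> {1..k}" and "S \<noteq> {}"
    and "\<And>t. t \<in> S \<Longrightarrow> d t > 0"
  defines "D \<equiv> (\<Sum>t\<in>S. t * d t)"
    and "dd \<equiv> (\<Sum>t\<in>S. d t)"
  shows "\<bar>prob_space.expectation M (\<lambda>x. \<Prod>t\<in>S. (Z x ^ t) ^ d t)\<bar>
           \<le> Min ((\<lambda>t. L ^ (D - t) * fact D * prob_space.expectation M (\<lambda>x. \<bar>Z x\<bar> ^ t) / fact t) ` S)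
       \<and> \<bar>prob_space.expectation M
            (\<lambda>x. \<Prod>t\<in>S. (Z x ^ t - prob_space.expectation M (\<lambda>y. Z y ^ t)) ^ d t)\<bar>
           \<le> Min ((\<lambda>t. 2 ^ dd * L ^ (D - t) * fact D * prob_space.expectation M (\<lambda>x. \<bar>Z x\<bar> ^ t) / fact t) ` S)"
proof -
  interpret mbZ M Z L
    by (rule mbZ.intro[OF assms(1)], rule mbZ_axioms.intro[OF assms(2,3,4)])
  have fin: "finite S" using assms(6) finite_subset by blast
  show ?thesis unfolding D_def dd_def by (rule main[OF fin assms(7) assms(8)])
qed

end
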